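(* Let $q$ be a power of $2$. In $\mathrm{AG}(3,q^2)$ with affine coordinates $x,y,z$, homogeneous coordinates $J,X,Y,Z$ and plane at infinity $\Sigma_\infty:J=0$, let $\mathcal H$ be the Hermitian surface $z^q+z=x^{q+1}+y^{q+1}$, let $P_\infty=(0,0,0,1)$, and let $\mathcal Q$ be a hyperbolic quadric with affine equation $z=ax^2+by^2+cxy+dx+ey+f$, $a,\dots,f\in\mathrm{GF}(q^2)$, such that $\mathcal Q\cap\mathcal H\cap\Sigma_\infty=\{P_\infty\}$. Let $\Xi_\infty$ be the quadric of $\mathrm{PG}(3,q)$ defined below. If $\Xi_\infty$ has rank $2$, then $\Xi_\infty$ is a line, i.e. it is the union of two conjugate planes defined over $\mathrm{GF}(q^2)$ but not over $\mathrm{GF}(q)$, whose set of points in $\mathrm{PG}(3,q)$ is a line.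
   Context: Fix $\nu\in\mathrm{GF}(q)\setminus\{1\}$ with absolute trace $\mathrm{Tr}_q(\nu)=\nu+\nu^2+\dots+\nu^{q/2}=1$, and $\varepsilon\in\mathrm{GF}(q^2)\setminus\mathrm{GF}(q)$ with $\varepsilon^2+\varepsilon+\nu=0$. Write each $t\in\mathrm{GF}(q^2)$ as $t=t_0+t_1\varepsilon$ with $t_0,t_1\in\mathrm{GF}(q)$ (so $a=a_0+a_1\varepsilon$, etc.). $\Xi_\infty$ is the quadric of $\mathrm{PG}(3,q)$ in coordinates $(x_0,x_1,y_0,y_1)$ with equation $(a_1+1)x_0^2+x_0x_1+[a_0+(1+\nu)a_1+\nu]x_1^2+(b_1+1)y_0^2+y_0y_1+[b_0+(1+\nu)b_1+\nu]y_1^2+c_1x_0y_0+(c_0+c_1)x_0y_1+(c_0+c_1)x_1y_0+[c_0+(1+\nu)c_1]x_1y_1=0.$ The rank of a quadric is the minimum number of indeterminates appearing in an equation for it under projective changes of coordinates. *)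

theory Defs
  imports "HOL-Analysis.Analysis"
begin

text \<open>GF(q^2) is modelled as a finite field type 'b with q^2 elements; GF(q) is its
  unique subfield of order q, namely the set of fixed points of the Frobenius t |-> t^q.\<close>
definition GFq :: "nat \<Rightarrow> 'b::field set" where
  "GFq q = {t. t ^ q = t}"

definition abs_trace :: "nat \<Rightarrow> 'b::field \<Rightarrow> 'b" where
  "abs_trace h nu = (\<Sum>i<h. nu ^ (2 ^ i))"

text \<open>Homogeneous coordinates (J,X,Y,Z) = (v$1,v$2,v$3,v$4); Sigma_infinity is J = 0.
  Homogenised equation of Q: zJ = aX^2+bY^2+cXY+dXJ+eYJ+fJ^2.\<close>
definition Q_form :: "'b::field \<Rightarrow> 'b \<Rightarrow> 'b \<Rightarrow> 'b \<Rightarrow> 'b \<Rightarrow> 'b \<Rightarrow> 'b^4 \<Rightarrow> 'b" where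
  "Q_form a b c d e f v =
     a * (v$2)^2 + b * (v$3)^2 + c * v$2 * v$3 + d * v$2 * v$1 + e * v$3 * v$1
     + f * (v$1)^2 - v$4 * v$1"

definition H_form :: "nat \<Rightarrow> 'b::field^4 \<Rightarrow> 'b" where
  "H_form q v = (v$4)^q * v$1 + v$4 * (v$1)^q - (v$2)^(q+1) - (v$3)^(q+1)"

definition hyperbolic_quadric :: "('b::field^4 \<Rightarrow> 'b) \<Rightarrow> bool" where
  "hyperbolic_quadric F \<longleftrightarrow>
     (\<exists>M::'b^4^4. invertible M \<and>
        (\<exists>lam. lam \<noteq> 0 \<and> (\<forall>w. F (M *v w) = lam * (w$1 * w$2 + w$3 * w$4))))"

text \<open>The quadric Xi_infinity of PG(3,q), coordinates (x0,x1,y0,y1) = (v$1,v$2,v$3,v$4).\<close>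
definition Xi_form :: "'b::field \<Rightarrow> 'b \<Rightarrow> 'b \<Rightarrow> 'b \<Rightarrow> 'b \<Rightarrow> 'b \<Rightarrow> 'b \<Rightarrow> 'b^4 \<Rightarrow> 'b" where
  "Xi_form a0 a1 b0 b1 c0 c1 nu v =
     (a1 + 1) * (v$1)^2 + v$1 * v$2 + (a0 + (1 + nu) * a1 + nu) * (v$2)^2
   + (b1 + 1) * (v$3)^2 + v$3 * v$4 + (b0 + (1 + nu) * b1 + nu) * (v$4)^2
   + c1 * v$1 * v$3 + (c0 + c1) * v$1 * v$4 + (c0 + c1) * v$2 * v$3
   + (c0 + (1 + nu) * c1) * v$2 * v$4"

definition depends_on :: "('b^4 \<Rightarrow> 'b) \<Rightarrow> 4 \<Rightarrow> bool" where
  "depends_on G i \<longleftrightarrow> (\<exists>w t. G (\<chi> j. if j = i then t else w$j) \<noteq> G w)"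

definition quadric_rank :: "'b::field set \<Rightarrow> ('b^4 \<Rightarrow> 'b) \<Rightarrow> nat" where
  "quadric_rank K F = (LEAST k. \<exists>M::'b^4^4. invertible M \<and> (\<forall>i j. M$i$j \<in> K) \<and>
       card {i. depends_on (\<lambda>w. F (M *v w)) i} = k)"

definition lin_form :: "'b::field^4 \<Rightarrow> 'b^4 \<Rightarrow> 'b" where
  "lin_form alpha v = (\<Sum>i\<in>UNIV. alpha$i * v$i)"

definition conjugate_planes :: "nat \<Rightarrow> 'b::field set \<Rightarrow> ('b^4 \<Rightarrow> 'b) \<Rightarrow> bool" where
  "conjugate_planes q K F \<longleftrightarrow>
     (\<exists>alpha::'b^4. \<not> (\<exists>mu. mu \<noteq> 0 \<and> (\<forall>i. mu * alpha$i \<in> K)) \<and>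
        (\<exists>kappa. kappa \<noteq> 0 \<and>
           (\<forall>v. F v = kappa * lin_form alpha v * lin_form (\<chi> i. (alpha$i)^q) v)))"

definition points_form_line :: "'b::field set \<Rightarrow> ('b^4 \<Rightarrow> 'b) \<Rightarrow> bool" where
  "points_form_line K F \<longleftrightarrow>
     (\<exists>u w::'b^4. (\<forall>i. u$i \<in> K) \<and> (\<forall>i. w$i \<in> K) \<and>
        (\<forall>s t. s \<in> K \<longrightarrow> t \<in> K \<longrightarrow> (\<chi> i. s * u$i + t * w$i) = 0 \<longrightarrow> s = 0 \<and> t = 0) \<and>
        {v. (\<forall>i. v$i \<in> K) \<and> v \<noteq> 0 \<and> F v = 0} =
        {(\<chi> i. s * u$i + t * w$i) | s t. s \<in> K \<and> t \<in> K \<and> (s \<noteq> 0 \<or> t \<noteq> 0)})"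

end

theory Submission imports Defs "HOL-Number_Theory.Residues" begin

lemma two_zero:
  assumes "CARD('b::{field,finite}) = 2 ^ n"
  shows "(2::'b) = 0"
proof -
  have "CHAR('b) dvd 2 ^ n" using CHAR_dvd_CARD[where 'a='b] assms by simp
  moreover have "CHAR('b) > 0" by (simp add: finite_imp_CHAR_pos)
  then have "prime CHAR('b)" by (rule prime_CHAR_semidom)
  ultimately have "CHAR('b) dvd 2" using prime_dvd_power by blast
  with \<open>prime CHAR('b)\<close> have "CHAR('b) = 2"
    by (metis prime_nat_iff two_is_prime_nat prime_gt_1_nat nat_neq_iff)
  then have "of_nat 2 = (0::'b)" by (metis of_nat_CHAR)
  then show ?thesis by simp
qed

lemma neg_char2: "(2::'a::comm_ring_1) = 0 \<Longrightarrow> - x = (x::'a)"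
  by (metis add_eq_0_iff2 mult_2 mult_zero_left)

lemma diff_char2: "(2::'a::comm_ring_1) = 0 \<Longrightarrow> x - y = x + (y::'a)"
  by (metis neg_char2 diff_conv_add_uminus)

lemma frob_add:
  assumes "(2::'a::comm_ring_1) = 0"
  shows "(x + y) ^ (2 ^ k) = x ^ (2 ^ k) + (y::'a) ^ (2 ^ k)"
proof (induction k)
  case 0 then show ?case by simp
next
  case (Suc k)
  have sq: "(u + v)^2 = u^2 + (v::'a)^2" for u v
  proof -
    have "(u + v) ^ 2 = u ^ 2 + v ^ 2 + 2 * u * v" by (simp add: power2_eq_square algebra_simps)
    then show ?thesis using assms by simp
  qed
  have "(x + y) ^ (2 ^ Suc k) = ((x + y) ^ (2 ^ k)) ^ 2" by (simp add: power_mult[symmetric] mult.commute)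
  also have "\<dots> = (x^(2^k))^2 + (y^(2^k))^2" using Suc sq by simp
  also have "\<dots> = x ^ (2 ^ Suc k) + y ^ (2 ^ Suc k)" by (simp add: power_mult[symmetric] mult.commute)
  finally show ?case .
qed

lemma frob_sum:
  assumes "(2::'a::comm_ring_1) = 0"
  shows "(sum f A) ^ (2 ^ k) = (\<Sum>i\<in>A. (f i :: 'a) ^ (2 ^ k))"
proof (cases "finite A")
  case True then show ?thesis
    by (induction A rule: finite_induct) (simp_all add: frob_add[OF assms] power_0_left)
qed (simp add: zero_power power_0_left)

lemma frob_neg:
  assumes "(2::'a::comm_ring_1) = 0"
  shows "(- x) ^ (2 ^ k) = (x::'a) ^ (2 ^ k)"
  by (subst neg_char2[OF assms]) simp


lemma GFq_0: "(0::'a::field) \<in> GFq (2^h)" by (simp add: GFq_def power_0_left)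
lemma GFq_1: "(1::'a::field) \<in> GFq (2^h)" by (simp add: GFq_def)
lemma GFq_add: "(2::'a::field) = 0 \<Longrightarrow> x \<in> GFq (2^h) \<Longrightarrow> y \<in> GFq (2^h) \<Longrightarrow> x + (y::'a) \<in> GFq (2^h)"
  by (simp add: GFq_def frob_add)
lemma GFq_mult: "x \<in> GFq (2^h) \<Longrightarrow> y \<in> GFq (2^h) \<Longrightarrow> x * (y::'a::field) \<in> GFq (2^h)"
  by (simp add: GFq_def power_mult_distrib)
lemma GFq_neg: "(2::'a::field) = 0 \<Longrightarrow> x \<in> GFq (2^h) \<Longrightarrow> - (x::'a) \<in> GFq (2^h)"
  by (simp add: neg_char2)
lemma GFq_diff: "(2::'a::field) = 0 \<Longrightarrow> x \<in> GFq (2^h) \<Longrightarrow> y \<in> GFq (2^h) \<Longrightarrow> x - (y::'a) \<in> GFq (2^h)"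
  by (simp add: diff_char2 GFq_add)
lemma GFq_pow: "x \<in> GFq (2^h) \<Longrightarrow> (x::'a::field) ^ n \<in> GFq (2^h)"
proof -
  assume "x \<in> GFq (2^h)"
  then have "x ^ 2 ^ h = x" by (simp add: GFq_def)
  then have "(x ^ n) ^ 2 ^ h = x ^ n" by (metis power_mult mult.commute)
  then show ?thesis by (simp add: GFq_def)
qed
lemma GFq_div: "x \<in> GFq (2^h) \<Longrightarrow> y \<in> GFq (2^h) \<Longrightarrow> x / (y::'a::field) \<in> GFq (2^h)"
  by (simp add: GFq_def power_divide)
lemma GFq_sum: "(2::'a::field) = 0 \<Longrightarrow> (\<And>i. i \<in> A \<Longrightarrow> f i \<in> GFq (2^h)) \<Longrightarrow> sum (f::_\<Rightarrow>'a) A \<in> GFq (2^h)"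
  by (simp add: GFq_def frob_sum)


definition Xs :: "'a::field \<Rightarrow> 'a \<Rightarrow> 'a \<Rightarrow> 'a \<Rightarrow> 'a \<Rightarrow> 'a \<Rightarrow> 'a \<Rightarrow> 'a \<Rightarrow> 'a \<Rightarrow> 'a \<Rightarrow> 'a \<Rightarrow> 'a" where
  "Xs a0 a1 b0 b1 c0 c1 nu x0 x1 y0 y1 =
     (a1 + 1) * x0^2 + x0 * x1 + (a0 + (1 + nu) * a1 + nu) * x1^2
   + (b1 + 1) * y0^2 + y0 * y1 + (b0 + (1 + nu) * b1 + nu) * y1^2
   + c1 * x0 * y0 + (c0 + c1) * x0 * y1 + (c0 + c1) * x1 * y0
   + (c0 + (1 + nu) * c1) * x1 * y1"

lemma Xi_Xs: "Xi_form a0 a1 b0 b1 c0 c1 nu v = Xs a0 a1 b0 b1 c0 c1 nu (v$1) (v$2) (v$3) (v$4)"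
  by (simp add: Xi_form_def Xs_def)

definition A0s :: "'a::comm_ring_1 \<Rightarrow> 'a \<Rightarrow> 'a \<Rightarrow> 'a \<Rightarrow> 'a \<Rightarrow> 'a \<Rightarrow> 'a \<Rightarrow> 'a \<Rightarrow> 'a \<Rightarrow> 'a \<Rightarrow> 'a \<Rightarrow> 'a" where
  "A0s a0 a1 b0 b1 c0 c1 nu u1 u2 u3 u4 = (c1*nu*u2*u4 + c1*nu*u2*u3 + c1*nu*u1*u4 + c0*u1*u3 + c0*nu*u2*u4 + b1*nu*u4^2 + b0*u3^2 + b0*nu*u4^2 + a1*nu*u2^2 + a0*u1^2 + a0*nu*u2^2)"
definition A1s :: "'a::comm_ring_1 \<Rightarrow> 'a \<Rightarrow> 'a \<Rightarrow> 'a \<Rightarrow> 'a \<Rightarrow> 'a \<Rightarrow> 'a \<Rightarrow> 'a \<Rightarrow> 'a \<Rightarrow> 'a \<Rightarrow> 'a \<Rightarrow> 'a" where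
  "A1s a0 a1 b0 b1 c0 c1 nu u1 u2 u3 u4 = (c1*u2*u4 + c1*u2*u3 + c1*u1*u4 + c1*u1*u3 + c1*nu*u2*u4 + c0*u2*u4 + c0*u2*u3 + c0*u1*u4 + b1*u4^2 + b1*u3^2 + b1*nu*u4^2 + b0*u4^2 + a1*u2^2 + a1*u1^2 + a1*nu*u2^2 + a0*u2^2)"

lemma id1: "A1s a0 a1 b0 b1 c0 c1 nu u1 u2 u3 u4 = (Xs a0 a1 b0 b1 c0 c1 nu (nu*u2) (u1+u2) (nu*u4) (u3+u4)) + (Xs a0 a1 b0 b1 c0 c1 nu (u1+nu*u2) (u2+(u1+u2)) (u3+nu*u4) (u4+(u3+u4))) + 2 * (- u3*u4 - u3^2 - u1*u2 - u1^2 - 4*nu*u4^2 - 5*nu*u3*u4 - nu*u3^2 - 4*nu*u2^2 - 5*nu*u1*u2 - nu*u1^2 - nu^2*u4^2 - nu^2*u2^2 - 2*c1*u2*u4 - 2*c1*u2*u3 - 2*c1*u1*u4 - 2*c1*u1*u3 - 5*c1*nu*u2*u4 - 3*c1*nu*u2*u3 - 3*c1*nu*u1*u4 - c1*nu*u1*u3 - c1*nu^2*u2*u4 - 2*c0*u2*u4 - 2*c0*u2*u3 - 2*c0*u1*u4 - 2*c0*u1*u3 - 3*c0*nu*u2*u4 - c0*nu*u2*u3 - c0*nu*u1*u4 - 2*b1*u4^2 - 3*b1*u3*u4 - b1*u3^2 - 2*b1*nu*u4^2 - 4*b1*nu*u3*u4 - b1*nu*u3^2 - b1*nu^2*u4^2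 - 2*b0*u4^2 - 3*b0*u3*u4 - b0*u3^2 - 2*a1*u2^2 - 3*a1*u1*u2 - a1*u1^2 - 2*a1*nu*u2^2 - 4*a1*nu*u1*u2 - a1*nu*u1^2 - a1*nu^2*u2^2 - 2*a0*u2^2 - 3*a0*u1*u2 - a0*u1^2)"
  unfolding A1s_def Xs_def by (simp add: algebra_simps power2_eq_square)
lemma id2: "(u1^2+u1*u2+nu*u2^2+u3^2+u3*u4+nu*u4^2) = (Xs a0 a1 b0 b1 c0 c1 nu u1 u2 u3 u4) - A1s a0 a1 b0 b1 c0 c1 nu u1 u2 u3 u4"
  unfolding A1s_def Xs_def by (simp add: algebra_simps power2_eq_square)
lemma id3: "A0s a0 a1 b0 b1 c0 c1 nu u1 u2 u3 u4 = (Xs a0 a1 b0 b1 c0 c1 nu (u1+nu*u2) (u2+(u1+u2)) (u3+nu*u4) (u4+(u3+u4))) + nu * (Xs a0 a1 b0 b1 c0 c1 nu u1 u2 u3 u4) + 2 * (- u3*u4 - u3^2 - u1*u2 - u1^2 - 3*nu*u4^2 - 4*nu*u3*u4 - nu*u3^2 - 3*nu*u2^2 - 4*nu*u1*u2 - nu*u1^2 - nu^2*u4^2 - nu^2*u2^2 - 2*c1*u2*u4 - 2*c1*u2*u3 - 2*c1*u1*u4 - 2*c1*u1*u3 - 4*c1*nu*u2*u4 - 2*c1*nu*u2*u3 - 2*c1*nu*u1*u4 - c1*nu*u1*u3 - c1*nu^2*u2*u4 - 2*c0*u2*u4 - 2*c0*u2*u3 - 2*c0*u1*u4 - c0*u1*u3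 - 2*c0*nu*u2*u4 - c0*nu*u2*u3 - c0*nu*u1*u4 - 2*b1*u4^2 - 2*b1*u3*u4 - b1*u3^2 - 2*b1*nu*u4^2 - 3*b1*nu*u3*u4 - b1*nu*u3^2 - b1*nu^2*u4^2 - 2*b0*u4^2 - 2*b0*u3*u4 - 2*a1*u2^2 - 2*a1*u1*u2 - a1*u1^2 - 2*a1*nu*u2^2 - 3*a1*nu*u1*u2 - a1*nu*u1^2 - a1*nu^2*u2^2 - 2*a0*u2^2 - 2*a0*u1*u2)"
  unfolding A0s_def Xs_def by (simp add: algebra_simps power2_eq_square)
lemma id4: "(a0+a1*eps)*(u1+u2*eps)^2+(b0+b1*eps)*(u3+u4*eps)^2+(c0+c1*eps)*(u1+u2*eps)*(u3+u4*eps)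
   = A0s a0 a1 b0 b1 c0 c1 nu u1 u2 u3 u4 + A1s a0 a1 b0 b1 c0 c1 nu u1 u2 u3 u4 * eps
     + (eps^2+eps+nu) * (- c1*u2*u4 + c1*u2*u3 + c1*u1*u4 + c1*eps*u2*u4 + c0*u2*u4 - b1*u4^2 + 2*b1*u3*u4 + b1*eps*u4^2 + b0*u4^2 - a1*u2^2 + 2*a1*u1*u2 + a1*eps*u2^2 + a0*u2^2) + 2 * (- c1*eps*u2*u3 - c1*eps*u1*u4 - c1*nu*u2*u3 - c1*nu*u1*u4 - c1*nu*eps*u2*u4 - c0*eps*u2*u4 - c0*nu*u2*u4 - b1*eps*u3*u4 - b1*nu*u3*u4 - b1*nu*eps*u4^2 - b0*eps*u4^2 + b0*eps*u3*u4 - b0*nu*u4^2 - a1*eps*u1*u2 - a1*nu*u1*u2 - a1*nu*eps*u2^2 - a0*eps*u2^2 + a0*eps*u1*u2 - a0*nu*u2^2)"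
  unfolding A0s_def A1s_def by (simp add: algebra_simps power2_eq_square)
lemma id5: "((u1::'a::field)+u2*eps)*(u1+u2*(eps+1)) = u1^2+u1*u2+nu*u2^2 + (eps^2+eps+nu)*(u2^2) + 2*(eps*u1*u2 - nu*u2^2)"
  by (simp add: algebra_simps power2_eq_square)

lemma excl_scalar:
  fixes a0 :: "'a::field"
  assumes two: "(2::'a) = 0" and rel: "eps^2+eps+nu = 0"
    and X1: "Xs a0 a1 b0 b1 c0 c1 nu u1 u2 u3 u4 = 0"
    and X2: "Xs a0 a1 b0 b1 c0 c1 nu (nu*u2) (u1+u2) (nu*u4) (u3+u4) = 0"
    and X3: "Xs a0 a1 b0 b1 c0 c1 nu (u1+nu*u2) (u2+(u1+u2)) (u3+nu*u4) (u4+(u3+u4)) = 0"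
  shows "(a0+a1*eps)*(u1+u2*eps)^2+(b0+b1*eps)*(u3+u4*eps)^2+(c0+c1*eps)*(u1+u2*eps)*(u3+u4*eps) = 0"
    and "(u1+u2*eps)*(u1+u2*(eps+1)) + (u3+u4*eps)*(u3+u4*(eps+1)) = 0"
proof -
  have A1: "A1s a0 a1 b0 b1 c0 c1 nu u1 u2 u3 u4 = 0"
    using id1[of a0 a1 b0 b1 c0 c1 nu u1 u2 u3 u4] X2 X3 two by simp
  have B: "u1^2+u1*u2+nu*u2^2+u3^2+u3*u4+nu*u4^2 = 0"
    using id2[of u1 u2 nu u3 u4 a0 a1 b0 b1 c0 c1] X1 A1 by simp
  have A0: "A0s a0 a1 b0 b1 c0 c1 nu u1 u2 u3 u4 = 0"
    using id3[of a0 a1 b0 b1 c0 c1 nu u1 u2 u3 u4] X1 X3 two by simp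
  show "(a0+a1*eps)*(u1+u2*eps)^2+(b0+b1*eps)*(u3+u4*eps)^2+(c0+c1*eps)*(u1+u2*eps)*(u3+u4*eps) = 0"
    using id4[of a0 a1 eps u1 u2 b0 b1 u3 u4 c0 c1 nu] A0 A1 rel two by simp
  show "(u1+u2*eps)*(u1+u2*(eps+1)) + (u3+u4*eps)*(u3+u4*(eps+1)) = 0"
  proof -
    have "(u1+u2*eps)*(u1+u2*(eps+1)) + (u3+u4*eps)*(u3+u4*(eps+1)) =
      (u1^2+u1*u2+nu*u2^2+u3^2+u3*u4+nu*u4^2) + (eps^2+eps+nu)*(u2^2+u4^2)
      + 2*((eps*u1*u2 - nu*u2^2) + (eps*u3*u4 - nu*u4^2))"
      unfolding id5[of u1 u2 eps nu] id5[of u3 u4 eps nu] by (simp add: algebra_simps)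
    then show ?thesis using B rel two by simp
  qed
qed


lemma shift_sum:
  fixes f :: "nat \<Rightarrow> 'a::comm_ring_1"
  shows "(\<Sum>k<h. f (Suc k)) = (\<Sum>k<h. f k) + f h - f 0"
proof -
  have "(\<Sum>k<Suc h. f k) = f 0 + (\<Sum>k<h. f (Suc k))" by (rule sum.lessThan_Suc_shift)
  moreover have "(\<Sum>k<Suc h. f k) = (\<Sum>k<h. f k) + f h" by simp
  ultimately show ?thesis by (simp add: algebra_simps)
qed

lemma trace_shift:
  fixes x :: "'a::field"
  assumes xq: "x ^ (2^h) = x"
  shows "(\<Sum>k<h. x ^ (2 ^ Suc k)) = abs_trace h x"
  using shift_sum[of "\<lambda>k. x ^ (2^k)" h] xq by (simp add: abs_trace_def)

lemma trace_idem:
  fixes x :: "'a::field"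
  assumes two: "(2::'a) = 0" and xq: "x ^ (2^h) = x"
  shows "(abs_trace h x)^2 = abs_trace h x"
proof -
  have "(abs_trace h x)^2 = (abs_trace h x)^(2^1)" by simp
  also have "\<dots> = (\<Sum>k<h. (x ^ (2^k))^(2^1))" unfolding abs_trace_def by (rule frob_sum[OF two])
  also have "\<dots> = (\<Sum>k<h. x ^ (2 ^ Suc k))" by (simp add: power_mult[symmetric] mult.commute)
  also have "\<dots> = abs_trace h x" by (rule trace_shift[OF xq])
  finally show ?thesis .
qed

lemma trace_formula:
  fixes th x :: "'a::field"
  assumes two: "(2::'a) = 0" and xq: "x ^ (2^h) = x"
  shows "(\<Sum>k<h. (\<Sum>i<k. th^(2^i)) * x^(2^k))^2
       = (\<Sum>k<h. (\<Sum>i<k. th^(2^i)) * x^(2^k)) + abs_trace h th * x + th * abs_trace h x"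
proof -
  define S where "S k = (\<Sum>i<k. th^(2^i))" for k
  define f where "f k = S k * x^(2^k)" for k
  have Sq: "(S k)^2 = S (Suc k) - th" for k
  proof -
    have "(S k)^2 = (S k)^(2^1)" by simp
    also have "\<dots> = (\<Sum>i<k. (th ^ (2^i))^(2^1))" unfolding S_def by (rule frob_sum[OF two])
    also have "\<dots> = (\<Sum>i<k. th ^ (2 ^ Suc i))" by (simp add: power_mult[symmetric] mult.commute)
    also have "\<dots> = S (Suc k) - th" unfolding S_def using shift_sum[of "\<lambda>i. th^(2^i)" k] by simp
    finally show ?thesis .
  qed
  have "(\<Sum>k<h. f k)^2 = (\<Sum>k<h. f k)^(2^1)" by simp
  also have "\<dots> = (\<Sum>k<h. (f k)^(2^1))" by (rule frob_sum[OF two])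
  also have "\<dots> = (\<Sum>k<h. (S (Suc k) - th) * x^(2 ^ Suc k))"
    by (rule sum.cong) (simp_all add: f_def power_mult_distrib Sq[symmetric] power_mult[symmetric] mult.commute)
  also have "\<dots> = (\<Sum>k<h. f (Suc k)) - th * (\<Sum>k<h. x^(2 ^ Suc k))"
    by (simp add: f_def algebra_simps sum_subtractf sum_distrib_left)
  also have "\<dots> = (\<Sum>k<h. f k) + f h - f 0 - th * abs_trace h x"
    using shift_sum[of f h] trace_shift[OF xq] by simp
  also have "f h = abs_trace h th * x" using xq by (simp add: f_def S_def abs_trace_def)
  also have "f 0 = 0" by (simp add: f_def S_def)
  finally show ?thesis unfolding f_def S_def using diff_char2[OF two] by simp
qed


lemma kernel4:
  fixes L1 :: "'a::field"
  assumes two: "(2::'a) = 0"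
    and K: "L1 \<in> GFq (2^h)" "L2 \<in> GFq (2^h)" "L3 \<in> GFq (2^h)" "L4 \<in> GFq (2^h)"
           "M1 \<in> GFq (2^h)" "M2 \<in> GFq (2^h)" "M3 \<in> GFq (2^h)" "M4 \<in> GFq (2^h)"
  shows "\<exists>u1 u2 u3 u4. u1 \<in> GFq (2^h) \<and> u2 \<in> GFq (2^h) \<and> u3 \<in> GFq (2^h) \<and> u4 \<in> GFq (2^h) \<and>
     (u1 \<noteq> 0 \<or> u2 \<noteq> 0 \<or> u3 \<noteq> 0 \<or> u4 \<noteq> 0) \<and>
     L1*u1 + L2*u2 + L3*u3 + L4*u4 = 0 \<and> M1*u1 + M2*u2 + M3*u3 + M4*u4 = 0"
proof -
  note cl = GFq_diff[OF two] GFq_mult GFq_neg[OF two] GFq_0 GFq_1 K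
  show ?thesis
  proof (cases "L1*M2 - L2*M1 \<noteq> 0 \<or> L1*M3 - L3*M1 \<noteq> 0 \<or> L2*M3 - L3*M2 \<noteq> 0")
    case True
    show ?thesis
      apply (rule exI[of _ "L2*M3 - L3*M2"], rule exI[of _ "L3*M1 - L1*M3"],
             rule exI[of _ "L1*M2 - L2*M1"], rule exI[of _ 0])
      using True by (auto intro!: cl simp: algebra_simps)
  next
    case F1: False
    show ?thesis
    proof (cases "L1*M4 - L4*M1 \<noteq> 0 \<or> L2*M4 - L4*M2 \<noteq> 0")
      case True
      show ?thesis
        apply (rule exI[of _ "L2*M4 - L4*M2"], rule exI[of _ "L4*M1 - L1*M4"],
               rule exI[of _ 0], rule exI[of _ "L1*M2 - L2*M1"])
        using True by (auto intro!: cl simp: algebra_simps)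
    next
      case F2: False
      show ?thesis
      proof (cases "L3*M4 - L4*M3 \<noteq> 0")
        case True
        show ?thesis
          apply (rule exI[of _ "L3*M4 - L4*M3"], rule exI[of _ 0],
                 rule exI[of _ "L4*M1 - L1*M4"], rule exI[of _ "L1*M3 - L3*M1"])
          using True by (auto intro!: cl simp: algebra_simps)
      next
        case F3: False
        have m12: "L1*M2 = L2*M1" and m13: "L1*M3 = L3*M1" and m23: "L2*M3 = L3*M2"
          and m14: "L1*M4 = L4*M1" and m24: "L2*M4 = L4*M2" and m34: "L3*M4 = L4*M3"
          using F1 F2 F3 by auto
        show ?thesis
        proof (cases "L1 \<noteq> 0 \<or> L2 \<noteq> 0")
          case True
          show ?thesis
            apply (rule exI[of _ L2], rule exI[of _ "-L1"], rule exI[of _ 0], rule exI[of _ 0])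
            using True m12 by (auto intro!: cl simp: algebra_simps)
        next
          case G1: False
          show ?thesis
          proof (cases "L3 \<noteq> 0 \<or> L4 \<noteq> 0")
            case True
            show ?thesis
              apply (rule exI[of _ 0], rule exI[of _ 0], rule exI[of _ L4], rule exI[of _ "-L3"])
              using True m34 by (auto intro!: cl simp: algebra_simps)
          next
            case G2: False
            show ?thesis
            proof (cases "M1 \<noteq> 0 \<or> M2 \<noteq> 0")
              case True
              show ?thesis
                apply (rule exI[of _ M2], rule exI[of _ "-M1"], rule exI[of _ 0], rule exI[of _ 0])
                using True G1 G2 by (auto intro!: cl simp: algebra_simps)
            next
              case G3: False
              show ?thesis
              proof (cases "M3 \<noteq> 0 \<or> M4 \<noteq> 0")
                case True
                show ?thesis
                  apply (rule exI[of _ 0], rule exI[of _ 0], rule exI[of _ M4], rule exI[of _ "-M3"])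
                  using True G1 G2 G3 by (auto intro!: cl simp: algebra_simps)
              next
                case False
                show ?thesis
                  apply (rule exI[of _ 1], rule exI[of _ 0], rule exI[of _ 0], rule exI[of _ 0])
                  using False G1 G2 G3 by (auto intro!: cl)
              qed
            qed
          qed
        qed
      qed
    qed
  qed
qed


definition vec4 :: "'a \<Rightarrow> 'a \<Rightarrow> 'a \<Rightarrow> 'a \<Rightarrow> 'a^4" where
  "vec4 a b c d = (\<chi> k. if k = 1 then a else if k = 2 then b else if k = 3 then c else d)"

lemma vec4_nth [simp]: "vec4 a b c d $ 1 = a" "vec4 a b c d $ 2 = b" "vec4 a b c d $ 3 = c" "vec4 a b c d $ 4 = d"
  by (simp_all add: vec4_def)

lemma vec4_eq_zero: "vec4 a b c d = 0 \<longleftrightarrow> a = 0 \<and> b = 0 \<and> c = 0 \<and> (d::'a::zero) = 0"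
  by (auto simp: vec_eq_iff forall_4)

lemma depend_reduce:
  fixes G :: "'a::zero^4 \<Rightarrow> 'a"
  assumes dep: "{k. depends_on G k} = {i, j}"
  shows "G w = G (\<chi> l. if l = i \<or> l = j then w$l else 0)"
proof -
  define z where "z = (\<chi> l. if l = i \<or> l = j then w$l else (0::'a))"
  define upd where "upd v k t = (\<chi> l. if l = k then t else v$l)" for v :: "'a^4" and k t
  have inv: "G (upd v k t) = G v" if "k \<notin> {i,j}" for v k t
    using that dep unfolding depends_on_def upd_def by blast
  have step: "G (upd v k (z$k)) = G v" if "v$k = w$k" for v k
  proof (cases "k \<in> {i,j}")
    case True
    then have "upd v k (z$k) = v" using that by (auto simp: upd_def z_def vec_eq_iff)
    then show ?thesis by simp
  next
    case False then show ?thesis by (rule inv)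
  qed
  define v1 where "v1 = upd w 1 (z$1)"
  define v2 where "v2 = upd v1 2 (z$2)"
  define v3 where "v3 = upd v2 3 (z$3)"
  define v4 where "v4 = upd v3 4 (z$4)"
  have "G v1 = G w" unfolding v1_def by (rule step) simp
  moreover have "G v2 = G v1" unfolding v2_def by (rule step) (simp add: v1_def upd_def)
  moreover have "G v3 = G v2" unfolding v3_def by (rule step) (simp add: v1_def v2_def upd_def)
  moreover have "G v4 = G v3" unfolding v4_def by (rule step) (simp add: v1_def v2_def v3_def upd_def)
  moreover have "v4 = z" by (simp add: v1_def v2_def v3_def v4_def upd_def vec_eq_iff forall_4)
  ultimately show ?thesis by (simp add: z_def)
qed


lemma Xs_K:
  fixes a0 :: "'a::field"
  assumes two: "(2::'a) = 0"
    and "a0 \<in> GFq (2^h)" "a1 \<in> GFq (2^h)" "b0 \<in> GFq (2^h)" "b1 \<in> GFq (2^h)"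
        "c0 \<in> GFq (2^h)" "c1 \<in> GFq (2^h)" "nu \<in> GFq (2^h)"
        "x0 \<in> GFq (2^h)" "x1 \<in> GFq (2^h)" "y0 \<in> GFq (2^h)" "y1 \<in> GFq (2^h)"
  shows "Xs a0 a1 b0 b1 c0 c1 nu x0 x1 y0 y1 \<in> GFq (2^h)"
  unfolding Xs_def using assms
  by (intro GFq_add[OF two] GFq_mult GFq_pow GFq_1) 

lemma Xi_quad:
  "Xi_form a0 a1 b0 b1 c0 c1 nu (\<chi> k. s * U$k + t * V$k) =
     s^2 * Xi_form a0 a1 b0 b1 c0 c1 nu U
   + s * t * (Xi_form a0 a1 b0 b1 c0 c1 nu (U + V) - Xi_form a0 a1 b0 b1 c0 c1 nu U - Xi_form a0 a1 b0 b1 c0 c1 nu V)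
   + t^2 * Xi_form a0 a1 b0 b1 c0 c1 nu (V :: 'a::field^4)"
  unfolding Xi_Xs by (simp add: Xs_def algebra_simps power2_eq_square)

lemma sum_two:
  assumes "i \<noteq> j"
  shows "(\<Sum>l\<in>UNIV. if l = i \<or> l = j then f l else (0::'a::comm_monoid_add)) = f i + f (j::'n::finite)"
proof -
  have "(\<Sum>l\<in>UNIV. if l = i \<or> l = j then f l else 0) = (\<Sum>l\<in>UNIV. if l \<in> {i,j} then f l else 0)"
    by simp
  also have "\<dots> = sum f (UNIV \<inter> {i,j})" by (rule sum.inter_restrict[symmetric]) simp
  also have "\<dots> = f i + f j" using assms by simp
  finally show ?thesis .
qed


theorem lemma6:
  fixes q h :: nat
    and nu eps a b c d e f a0 a1 b0 b1 c0 c1 :: "'b::{field,finite}"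
  assumes q_def: "q = 2 ^ h" and h_pos: "h \<ge> 1"
    and card_F: "CARD('b) = q ^ 2"
    and nu_q: "nu \<in> GFq q" and nu_ne1: "nu \<noteq> 1" and trace_nu: "abs_trace h nu = 1"
    and eps_notq: "eps \<notin> GFq q" and eps_eq: "eps ^ 2 + eps + nu = 0"
    and a_split: "a0 \<in> GFq q" "a1 \<in> GFq q" "a = a0 + a1 * eps"
    and b_split: "b0 \<in> GFq q" "b1 \<in> GFq q" "b = b0 + b1 * eps"
    and c_split: "c0 \<in> GFq q" "c1 \<in> GFq q" "c = c0 + c1 * eps"
    and hyp: "hyperbolic_quadric (Q_form a b c d e f)"
    and inf_cap: "{v. v \<noteq> 0 \<and> v$1 = 0 \<and> Q_form a b c d e f v = 0 \<and> H_form q v = 0}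
                  = {v. v \<noteq> 0 \<and> v$1 = 0 \<and> v$2 = 0 \<and> v$3 = 0}"
    and rank2: "quadric_rank (GFq q) (Xi_form a0 a1 b0 b1 c0 c1 nu) = 2"
  shows "conjugate_planes q (GFq q) (Xi_form a0 a1 b0 b1 c0 c1 nu) \<and>
         points_form_line (GFq q) (Xi_form a0 a1 b0 b1 c0 c1 nu)"
proof -
  define Xi where "Xi = Xi_form a0 a1 b0 b1 c0 c1 nu"
  let ?K = "GFq (2^h) :: 'b set"
  have GK: "GFq q = ?K" by (simp add: q_def)
  have two: "(2::'b) = 0"
    using two_zero[of "2*h"] card_F q_def by (simp add: power_mult[symmetric] mult.commute)
  note cl = GFq_add[OF two] GFq_mult GFq_diff[OF two] GFq_neg[OF two] GFq_0 GFq_1 GFq_pow GFq_div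
  have Kq: "x ^ (2^h) = x" if "x \<in> ?K" for x using that by (simp add: GFq_def)
  have inK: "x \<in> ?K" if "x ^ (2^h) = x" for x using that by (simp add: GFq_def)
  have nuK: "nu \<in> ?K" and a0K: "a0 \<in> ?K" and a1K: "a1 \<in> ?K" and b0K: "b0 \<in> ?K" and b1K: "b1 \<in> ?K"
    and c0K: "c0 \<in> ?K" and c1K: "c1 \<in> ?K" using GK nu_q a_split b_split c_split by auto
  have epsK: "eps \<notin> ?K" using GK eps_notq by simp
  have fr: "(x + y) ^ (2^h) = x ^ (2^h) + y ^ (2^h)" for x y :: 'b by (rule frob_add[OF two])
  have epsq: "eps ^ (2^h) = eps + 1"
  proof -
    define r where "r = eps ^ (2^h)"
    have "(eps^2 + eps + nu) ^ (2^h) = 0" using eps_eq by (simp add: power_0_left)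
    then have "r^2 + r + nu = 0"
      using Kq[OF nuK] by (simp add: fr r_def power_mult[symmetric] mult.commute)
    then have "(r + eps) * (r + eps + 1) = (r^2 + r + nu) + (eps^2+eps+nu) + 2 * (r*eps - nu)"
      by (simp add: algebra_simps power2_eq_square)
    also have "\<dots> = 0" using \<open>r^2 + r + nu = 0\<close> eps_eq two by simp
    finally have "r + eps = 0 \<or> r + eps + 1 = 0" by simp
    then show ?thesis
    proof
      assume "r + eps = 0"
      then have "r = eps" using neg_char2[OF two] by (metis add_eq_0_iff)
      then show ?thesis using inK epsK r_def by auto
    next
      assume "r + eps + 1 = 0"
      then have "r = - (eps + 1)" by (simp add: add_eq_0_iff2 add.assoc)
      then show ?thesis using neg_char2[OF two] r_def by metis
    qed
  qed

  define P where "P k = (\<exists>M::'b^4^4. invertible M \<and> (\<forall>i j. M$i$j \<in> GFq q) \<and>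
       card {i. depends_on (\<lambda>w. Xi_form a0 a1 b0 b1 c0 c1 nu (M *v w)) i} = k)" for k
  have "P (card {i. depends_on (\<lambda>w. Xi_form a0 a1 b0 b1 c0 c1 nu (mat 1 *v w)) i})"
    unfolding P_def
  proof (intro exI conjI allI)
    show "invertible (mat 1 :: 'b^4^4)" unfolding invertible_def by (auto intro: exI[of _ "mat 1"])
    show "mat 1 $ i $ j \<in> GFq q" for i j by (simp add: mat_def q_def GFq_0 GFq_1)
  qed simp
  then have "P (LEAST k. P k)" by (rule LeastI)
  then have "P 2" using rank2 by (simp add: quadric_rank_def P_def)
  then obtain M :: "'b^4^4" where Minv: "invertible M" and MK: "\<And>i j. M$i$j \<in> ?K"
    and Mcard: "card {i. depends_on (\<lambda>w. Xi (M *v w)) i} = 2"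
    unfolding P_def Xi_def using GK by auto
  obtain N :: "'b^4^4" where MN: "M ** N = mat 1" and NM: "N ** M = mat 1"
    using Minv unfolding invertible_def by auto
  have NK: "N$i$j \<in> ?K" for i j
  proof -
    define Nq :: "'b^4^4" where "Nq = (\<chi> i j. (N$i$j)^(2^h))"
    have "Nq ** M = mat 1"
    proof -
      have "(Nq ** M) $ i $ k = ((N ** M) $ i $ k) ^ (2^h)" for i k
        by (simp add: matrix_matrix_mult_def Nq_def frob_sum[OF two] power_mult_distrib Kq[OF MK])
      then show ?thesis using NM by (simp add: vec_eq_iff mat_def power_0_left)
    qed
    have "Nq = Nq ** (M ** N)" by (simp add: MN)
    also have "\<dots> = (Nq ** M) ** N" by (rule matrix_mul_assoc)
    also have "\<dots> = N" using \<open>Nq ** M = mat 1\<close> by simp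
    finally have "Nq = N" .
    then have "Nq $ i $ j = N $ i $ j" by simp
    then have "(N$i$j)^(2^h) = N$i$j" by (simp add: Nq_def)
    then show ?thesis by (rule inK)
  qed
  obtain i j where ij: "i \<noteq> j" and dep: "{k. depends_on (\<lambda>w. Xi (M *v w)) k} = {i, j}"
    using Mcard card_2_iff by (metis (no_types, lifting))
  define U :: "'b^4" where "U = (\<chi> k. M$k$i)"
  define V :: "'b^4" where "V = (\<chi> k. M$k$j)"
  have XiK: "Xi v \<in> ?K" if "\<And>k. v$k \<in> ?K" for v
    unfolding Xi_def Xi_Xs by (intro Xs_K[OF two] nuK a0K a1K b0K b1K c0K c1K that)
  define \<alpha> where "\<alpha> = Xi U"
  define \<gamma> where "\<gamma> = Xi V"
  define \<beta> where "\<beta> = Xi (U + V) - Xi U - Xi V"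
  have \<alpha>K: "\<alpha> \<in> ?K" unfolding \<alpha>_def by (rule XiK) (simp add: U_def MK)
  have \<gamma>K: "\<gamma> \<in> ?K" unfolding \<gamma>_def by (rule XiK) (simp add: V_def MK)
  have \<beta>K: "\<beta> \<in> ?K" unfolding \<beta>_def
    by (intro cl XiK) (simp_all add: U_def V_def MK cl)
  define g where "g s t = \<alpha> * s^2 + \<beta> * s * t + \<gamma> * t^2" for s t
  have Gw: "Xi (M *v w) = g (w$i) (w$j)" for w
  proof -
    have "Xi (M *v w) = Xi (M *v (\<chi> l. if l = i \<or> l = j then w$l else 0))"
      by (rule depend_reduce[OF dep])
    also have "M *v (\<chi> l. if l = i \<or> l = j then w$l else 0) = (\<chi> k. (w$i) * U$k + (w$j) * V$k)"
    proof -
      have "(M *v (\<chi> l. if l = i \<or> l = j then w$l else 0)) $ k = (w$i) * U$k + (w$j) * V$k" for k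
      proof -
        have "(M *v (\<chi> l. if l = i \<or> l = j then w$l else 0)) $ k
            = (\<Sum>l\<in>UNIV. if l = i \<or> l = j then M$k$l * w$l else 0)"
          unfolding matrix_vector_mult_def by (auto intro!: sum.cong)
        also have "\<dots> = M$k$i * w$i + M$k$j * w$j" by (rule sum_two[OF ij])
        finally show ?thesis by (simp add: U_def V_def mult.commute)
      qed
      then show ?thesis by (simp add: vec_eq_iff)
    qed
    also have "Xi \<dots> = g (w$i) (w$j)"
      unfolding Xi_def Xi_quad g_def \<alpha>_def \<beta>_def \<gamma>_def by (simp add: Xi_def algebra_simps)
    finally show ?thesis .
  qed
  have Xv: "Xi v = g ((N *v v)$i) ((N *v v)$j)" for v
    using Gw[of "N *v v"] by (simp add: matrix_vector_mul_assoc MN)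
  have NvK: "(N *v v)$k \<in> ?K" if "\<And>k. v$k \<in> ?K" for v k
    unfolding matrix_vector_mult_def using that by (auto intro!: GFq_sum[OF two] GFq_mult NK)

  have hom: "g p r = 0" if tp: "t*p = s*r" and gz: "g s t = 0" and nz: "\<not>(s=0 \<and> t=0)" for s t p r
  proof -
    have e1: "s^2 * g p r = p^2 * g s t + (s * r - t * p) * (\<beta> * p * s + \<gamma> * (s * r + t * p))"
      by (simp add: g_def algebra_simps power2_eq_square)
    have e2: "t^2 * g p r = r^2 * g s t + (t * p - s * r) * (\<beta> * r * t + \<alpha> * (t * p + s * r))"
      by (simp add: g_def algebra_simps power2_eq_square)
    show ?thesis
    proof (cases "s = 0")
      case False
      then show ?thesis using e1 tp gz by simp
    next
      case True
      then have "t \<noteq> 0" using nz by simp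
      then show ?thesis using e2 tp gz by simp
    qed
  qed
  have zsplit: "w1 = 0 \<and> w2 = 0" if "w1 \<in> ?K" "w2 \<in> ?K" "w1 + w2 * eps = 0" for w1 w2
  proof (cases "w2 = 0")
    case True then show ?thesis using that by simp
  next
    case False
    then have "eps = - w1 / w2" using that(3) by (simp add: field_simps add_eq_0_iff2)
    then have "eps \<in> ?K" using that False by (simp add: cl)
    then show ?thesis using epsK by simp
  qed
  have hpos: "(0::nat) < 2^h" by simp
  have noz: "s = 0 \<and> t = 0" if sK: "s \<in> ?K" and tK: "t \<in> ?K" and gz: "g s t = 0" for s t
  proof (rule ccontr)
    assume nz: "\<not>(s = 0 \<and> t = 0)"
    define L where "L k = t * N$i$k - s * N$j$k" for k
    have LK: "L k \<in> ?K" for k unfolding L_def by (intro cl NK sK tK)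
    have ker: "Xi v = 0" if "L 1 * v$1 + L 2 * v$2 + L 3 * v$3 + L 4 * v$4 = 0" for v
    proof -
      have "t * (N *v v)$i - s * (N *v v)$j = (\<Sum>k\<in>UNIV. L k * v$k)"
        by (simp add: matrix_vector_mult_def L_def sum_distrib_left sum_subtractf algebra_simps)
      also have "\<dots> = 0" using that by (simp add: sum_4)
      finally have "t * (N *v v)$i = s * (N *v v)$j" by simp
      then show ?thesis unfolding Xv using hom gz nz by blast
    qed
    have M2K: "nu * L 1 + L 2 \<in> ?K" and M4K: "nu * L 3 + L 4 \<in> ?K" by (intro cl nuK LK)+
    obtain u1 u2 u3 u4 where uK: "u1 \<in> ?K" "u2 \<in> ?K" "u3 \<in> ?K" "u4 \<in> ?K"
      and nzu: "u1 \<noteq> 0 \<or> u2 \<noteq> 0 \<or> u3 \<noteq> 0 \<or> u4 \<noteq> 0"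
      and k1: "L 1*u1 + L 2*u2 + L 3*u3 + L 4*u4 = 0"
      and k2: "L 2*u1 + (nu * L 1 + L 2)*u2 + L 4*u3 + (nu * L 3 + L 4)*u4 = 0"
      using kernel4[OF two LK[of 1] LK[of 2] LK[of 3] LK[of 4] LK[of 2] M2K LK[of 4] M4K] by blast
    have X1: "Xi (vec4 u1 u2 u3 u4) = 0" by (rule ker) (simp add: k1)
    have X2: "Xi (vec4 (nu*u2) (u1+u2) (nu*u4) (u3+u4)) = 0"
    proof (rule ker)
      have "L 1 * (nu*u2) + L 2 * (u1+u2) + L 3 * (nu*u4) + L 4 * (u3+u4)
          = L 2*u1 + (nu * L 1 + L 2)*u2 + L 4*u3 + (nu * L 3 + L 4)*u4" by (simp add: algebra_simps)
      then show "L 1 * vec4 (nu*u2) (u1+u2) (nu*u4) (u3+u4) $ 1 + L 2 * vec4 (nu*u2) (u1+u2) (nu*u4) (u3+u4) $ 2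
          + L 3 * vec4 (nu*u2) (u1+u2) (nu*u4) (u3+u4) $ 3 + L 4 * vec4 (nu*u2) (u1+u2) (nu*u4) (u3+u4) $ 4 = 0"
        using k2 by simp
    qed
    have X3: "Xi (vec4 (u1+nu*u2) (u2+(u1+u2)) (u3+nu*u4) (u4+(u3+u4))) = 0"
    proof (rule ker)
      have "L 1 * (u1+nu*u2) + L 2 * (u2+(u1+u2)) + L 3 * (u3+nu*u4) + L 4 * (u4+(u3+u4))
          = (L 1*u1 + L 2*u2 + L 3*u3 + L 4*u4) + (L 2*u1 + (nu * L 1 + L 2)*u2 + L 4*u3 + (nu * L 3 + L 4)*u4)"
        by (simp add: algebra_simps)
      then show "L 1 * vec4 (u1+nu*u2) (u2+(u1+u2)) (u3+nu*u4) (u4+(u3+u4)) $ 1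
          + L 2 * vec4 (u1+nu*u2) (u2+(u1+u2)) (u3+nu*u4) (u4+(u3+u4)) $ 2
          + L 3 * vec4 (u1+nu*u2) (u2+(u1+u2)) (u3+nu*u4) (u4+(u3+u4)) $ 3
          + L 4 * vec4 (u1+nu*u2) (u2+(u1+u2)) (u3+nu*u4) (u4+(u3+u4)) $ 4 = 0"
        using k1 k2 by simp
    qed
    note ex = excl_scalar[OF two eps_eq, of a0 a1 b0 b1 c0 c1 u1 u2 u3 u4]
    have Qz: "(a0+a1*eps)*(u1+u2*eps)^2+(b0+b1*eps)*(u3+u4*eps)^2+(c0+c1*eps)*(u1+u2*eps)*(u3+u4*eps) = 0"
      and Hz: "(u1+u2*eps)*(u1+u2*(eps+1)) + (u3+u4*eps)*(u3+u4*(eps+1)) = 0"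
      using ex X1 X2 X3 unfolding Xi_def Xi_Xs by simp_all
    define x where "x = u1 + u2 * eps"
    define y where "y = u3 + u4 * eps"
    have xq: "x ^ (2^h) = u1 + u2 * (eps + 1)"
      unfolding x_def fr power_mult_distrib using Kq uK epsq by simp
    have yq: "y ^ (2^h) = u3 + u4 * (eps + 1)"
      unfolding y_def fr power_mult_distrib using Kq uK epsq by simp
    define vv :: "'b^4" where "vv = vec4 0 x y 0"
    have xy0: "x = 0 \<and> y = 0"
    proof (rule ccontr)
      assume nxy: "\<not>(x = 0 \<and> y = 0)"
      then have "vv \<noteq> 0" by (simp add: vv_def vec4_eq_zero)
      moreover have "Q_form a b c d e f vv = 0"
        using Qz by (simp add: Q_form_def vv_def a_split b_split c_split x_def y_def)
      moreover have "H_form q vv = 0"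
      proof -
        have "H_form q vv = - (x * x^(2^h) + y * y^(2^h))"
          using hpos by (simp add: H_form_def vv_def q_def power_0_left power_Suc2 diff_char2[OF two] neg_char2[OF two] mult.commute)
        also have "\<dots> = 0" using Hz xq yq by (simp add: x_def y_def)
        finally show ?thesis .
      qed
      ultimately have "vv \<in> {v. v \<noteq> 0 \<and> v$1 = 0 \<and> Q_form a b c d e f v = 0 \<and> H_form q v = 0}"
        by (simp add: vv_def)
      then have "vv$2 = 0 \<and> vv$3 = 0" using inf_cap by auto
      then show False using nxy by (simp add: vv_def)
    qed
    then have "u1 = 0 \<and> u2 = 0" "u3 = 0 \<and> u4 = 0" using zsplit uK by (auto simp: x_def y_def)
    then show False using nzu by simp
  qed

  have anz: "\<alpha> \<noteq> 0"
  proof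
    assume "\<alpha> = 0"
    then have "g 1 0 = 0" by (simp add: g_def)
    then show False using noz[OF GFq_1 GFq_0] by simp
  qed
  have hsq: "(z ^ (2^(h-1)))^2 = z ^ (2^h)" for z :: 'b
  proof -
    have "(2::nat)^(h-1) * 2 = 2^h" using h_pos by (metis Suc_diff_1 not_one_le_zero neq0_conv power_Suc2)
    then show ?thesis by (metis power_mult)
  qed
  have bnz: "\<beta> \<noteq> 0"
  proof
    assume b0: "\<beta> = 0"
    define s where "s = \<gamma> ^ (2^(h-1))"
    define t where "t = \<alpha> ^ (2^(h-1))"
    have s2: "s^2 = \<gamma>" unfolding s_def hsq by (rule Kq[OF \<gamma>K])
    have t2: "t^2 = \<alpha>" unfolding t_def hsq by (rule Kq[OF \<alpha>K])
    have "g s t = \<alpha> * \<gamma> + \<gamma> * \<alpha>"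
      using b0 s2 t2 by (simp add: g_def)
    also have "\<dots> = 2 * (\<alpha> * \<gamma>)" by (simp add: algebra_simps)
    finally have "g s t = 0" using two by simp
    then have "t = 0" using noz[of s t] \<alpha>K \<gamma>K by (simp add: s_def t_def cl)
    then show False using anz by (simp add: t_def)
  qed
  define \<delta> where "\<delta> = \<alpha> * \<gamma> / \<beta>^2"
  have dK: "\<delta> \<in> ?K" unfolding \<delta>_def by (intro cl \<alpha>K \<beta>K \<gamma>K)
  define \<mu> where "\<mu> = (\<Sum>k<h. (\<Sum>i<k. nu^(2^i)) * \<delta>^(2^k))"
  have mK: "\<mu> \<in> ?K" unfolding \<mu>_def by (intro GFq_sum[OF two] cl nuK dK)
  define T where "T = abs_trace h \<delta>"
  have meq: "\<mu>^2 = \<mu> + \<delta> + nu * T"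
    using trace_formula[OF two Kq[OF dK], of nu] trace_nu by (simp add: \<mu>_def T_def)
  have "T^2 = T" unfolding T_def by (rule trace_idem[OF two Kq[OF dK]])
  then have "T * (T - 1) = 0" by (simp add: algebra_simps power2_eq_square)
  then have T01: "T = 0 \<or> T = 1" by simp
  have T1: "T = 1"
  proof (rule ccontr)
    assume "T \<noteq> 1"
    then have m2: "\<mu>^2 = \<mu> + \<delta>" using T01 meq by simp
    have "g (\<beta> * \<mu> / \<alpha>) 1 = (\<beta>^2 / \<alpha>) * (\<mu>^2 - \<mu> - \<delta>) + 2 * (\<beta>^2 / \<alpha> * \<mu> + \<gamma>)"
      using anz bnz by (simp add: g_def \<delta>_def field_simps power2_eq_square)
    also have "\<dots> = 0" using m2 two by simp
    finally have "g (\<beta> * \<mu> / \<alpha>) 1 = 0" .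
    then show False using noz[of "\<beta> * \<mu> / \<alpha>" 1] \<alpha>K \<beta>K mK by (simp add: cl)
  qed
  then have meq1: "\<mu>^2 = \<mu> + \<delta> + nu" using meq by simp
  define \<rho> where "\<rho> = \<beta> * (eps + \<mu>) / \<alpha>"
  have rq: "\<rho> ^ (2^h) = \<rho> + \<beta> / \<alpha>"
  proof -
    have "\<rho> ^ (2^h) = \<beta> * (eps + 1 + \<mu>) / \<alpha>"
      unfolding \<rho>_def power_divide power_mult_distrib fr using Kq \<alpha>K \<beta>K mK epsq by simp
    also have "\<dots> = \<rho> + \<beta> / \<alpha>" using anz by (simp add: \<rho>_def field_simps)
    finally show ?thesis .
  qed
  have h1: "\<alpha> * \<rho>^2 + \<beta> * \<rho> = \<gamma>"
  proof -
    have "\<alpha> * \<rho>^2 + \<beta> * \<rho> = (\<beta>^2 / \<alpha>) * ((eps + \<mu>)^2 + (eps + \<mu>))"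
      using anz by (simp add: \<rho>_def field_simps power2_eq_square)
    also have "(eps + \<mu>)^2 + (eps + \<mu>) = (eps^2 + eps + nu) + (\<mu>^2 - (\<mu> + \<delta> + nu)) + \<delta> + 2 * (\<mu> + eps * \<mu>)"
      by (simp add: algebra_simps power2_eq_square)
    also have "\<dots> = \<delta>" using eps_eq meq1 two by simp
    also have "(\<beta>^2 / \<alpha>) * \<delta> = \<gamma>" using anz bnz by (simp add: \<delta>_def field_simps power2_eq_square)
    finally show ?thesis .
  qed
  have fact: "g s t = \<alpha> * (s + \<rho> * t) * (s + \<rho>^(2^h) * t)" for s t
  proof -
    have "\<alpha> * (s + \<rho> * t) * (s + (\<rho> + \<beta> / \<alpha>) * t)
        = \<alpha> * s^2 + \<beta> * s * t + (\<alpha> * \<rho>^2 + \<beta> * \<rho>) * t^2 + 2 * (\<alpha> * \<rho> * s * t)"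
      using anz by (simp add: field_simps power2_eq_square)
    then show ?thesis using h1 two rq by (simp add: g_def)
  qed
  have rnK: "\<rho> ^ (2^h) \<noteq> \<rho>" using rq anz bnz by simp

  define al :: "'b^4" where "al = (\<chi> k. N$i$k + \<rho> * N$j$k)"
  have lin1: "lin_form al v = (N *v v)$i + \<rho> * (N *v v)$j" for v
    by (simp add: lin_form_def al_def matrix_vector_mult_def sum.distrib sum_distrib_left algebra_simps)
  have alq: "(\<chi> k. (al$k)^q) = (\<chi> k. N$i$k + \<rho>^(2^h) * N$j$k)"
    by (simp add: al_def q_def fr power_mult_distrib Kq NK)
  have lin2: "lin_form (\<chi> k. (al$k)^q) v = (N *v v)$i + \<rho>^(2^h) * (N *v v)$j" for v
    unfolding alq
    by (simp add: lin_form_def matrix_vector_mult_def sum.distrib sum_distrib_left algebra_simps)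
  have NMe: "(N ** M) $ m $ r = (if m = r then 1 else 0)" for m r using NM by (simp add: mat_def)
  have cp: "conjugate_planes q (GFq q) Xi"
    unfolding conjugate_planes_def
  proof (intro exI conjI allI)
    show "\<alpha> \<noteq> 0" by (rule anz)
    show "Xi v = \<alpha> * lin_form al v * lin_form (\<chi> i. (al$i)^q) v" for v
      unfolding lin1 lin2 Xv fact by (simp add: mult.assoc)
    show "\<not> (\<exists>mu. mu \<noteq> 0 \<and> (\<forall>k. mu * al$k \<in> GFq q))"
    proof
      assume "\<exists>mu. mu \<noteq> 0 \<and> (\<forall>k. mu * al$k \<in> GFq q)"
      then obtain mu where mu0: "mu \<noteq> 0" and muK: "\<And>k. mu * al$k \<in> ?K" using GK by auto
      define c1 where "c1 = mu^(2^h) - mu"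
      define c2 where "c2 = mu^(2^h) * \<rho>^(2^h) - mu * \<rho>"
      have c: "c1 * N$i$k + c2 * N$j$k = 0" for k
      proof -
        have "(mu * al$k)^(2^h) = mu * al$k" using Kq[OF muK[of k]] .
        moreover have "(mu * al$k)^(2^h) = mu^(2^h) * (N$i$k + \<rho>^(2^h) * N$j$k)"
          by (simp add: al_def power_mult_distrib fr Kq NK)
        ultimately have "mu^(2^h) * (N$i$k + \<rho>^(2^h) * N$j$k) = mu * (N$i$k + \<rho> * N$j$k)"
          by (simp add: al_def)
        then show ?thesis by (simp add: c1_def c2_def algebra_simps)
      qed
      have z: "c1 * (N ** M)$i$m + c2 * (N ** M)$j$m = 0" for m
      proof -
        have "c1 * (N ** M)$i$m + c2 * (N ** M)$j$m = (\<Sum>k\<in>UNIV. (c1 * N$i$k + c2 * N$j$k) * M$k$m)"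
          by (simp add: matrix_matrix_mult_def sum_distrib_left sum.distrib algebra_simps)
        also have "\<dots> = 0" using c by simp
        finally show ?thesis .
      qed
      have "c1 = 0" using z[of i] ij by (simp add: NMe)
      moreover have "c2 = 0" using z[of j] ij by (simp add: NMe)
      ultimately have "mu * \<rho>^(2^h) = mu * \<rho>" by (simp add: c1_def c2_def)
      then show False using mu0 rnK by simp
    qed
  qed
  have cardD: "card (UNIV - {i, j} :: 4 set) = 2"
    using ij by (simp add: card_Diff_subset)
  then obtain k l where kl: "k \<noteq> l" and klD: "UNIV - {i, j} = {k, l}"
    using card_2_iff by (metis (no_types, lifting))
  have kij: "k \<noteq> i" "k \<noteq> j" "l \<noteq> i" "l \<noteq> j" using klD by blast+
  have UNIV4: "(UNIV :: 4 set) = {i, j, k, l}" using klD by blast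
  define u :: "'b^4" where "u = (\<chi> r. M$r$k)"
  define w :: "'b^4" where "w = (\<chi> r. M$r$l)"
  have Ncomb: "(N *v (\<chi> r. s * u$r + t * w$r)) $ m = s * (N ** M)$m$k + t * (N ** M)$m$l" for s t m
    by (simp add: matrix_vector_mult_def matrix_matrix_mult_def u_def w_def sum.distrib sum_distrib_left algebra_simps)
  have indep: "s = 0 \<and> t = 0" if "(\<chi> r. s * u$r + t * w$r) = 0" for s t
  proof -
    have "(N *v (\<chi> r. s * u$r + t * w$r)) $ k = 0" "(N *v (\<chi> r. s * u$r + t * w$r)) $ l = 0"
      using that by simp_all
    then show ?thesis unfolding Ncomb using kl by (simp add: NMe)
  qed
  have Mdec: "v = (\<chi> r. (N *v v)$k * u$r + (N *v v)$l * w$r)"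
    if "(N *v v)$i = 0" "(N *v v)$j = 0" for v
  proof -
    have "v = M *v (N *v v)" by (simp add: matrix_vector_mul_assoc MN)
    also have "\<dots> = (\<chi> r. (N *v v)$k * u$r + (N *v v)$l * w$r)"
    proof -
      have "(M *v (N *v v)) $ r = (N *v v)$k * u$r + (N *v v)$l * w$r" for r
      proof -
        have "(M *v (N *v v)) $ r = (\<Sum>m\<in>{i, j, k, l}. M$r$m * (N *v v)$m)"
          unfolding matrix_vector_mult_def UNIV4[symmetric] by simp
        also have "\<dots> = M$r$k * (N *v v)$k + M$r$l * (N *v v)$l"
          using ij kl kij that by simp
        finally show ?thesis by (simp add: u_def w_def mult.commute)
      qed
      then show ?thesis by (simp add: vec_eq_iff)
    qed
    finally show ?thesis .
  qed
  have uK: "u$r \<in> ?K" "w$r \<in> ?K" for r by (simp_all add: u_def w_def MK)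
  have pl: "points_form_line (GFq q) Xi"
    unfolding points_form_line_def GK
  proof (intro exI conjI allI impI)
    show "u$r \<in> ?K" "w$r \<in> ?K" for r by (rule uK)+
    show "s = 0" "t = 0" if "(\<chi> r. s * u$r + t * w$r) = 0" for s t using indep[OF that] by simp_all
    show "{v. (\<forall>i. v$i \<in> ?K) \<and> v \<noteq> 0 \<and> Xi v = 0} =
          {(\<chi> i. s * u$i + t * w$i) | s t. s \<in> ?K \<and> t \<in> ?K \<and> (s \<noteq> 0 \<or> t \<noteq> 0)}"
    proof (rule equalityI; rule subsetI)
      fix v assume "v \<in> {v. (\<forall>i. v$i \<in> ?K) \<and> v \<noteq> 0 \<and> Xi v = 0}"
      then have vK: "\<And>r. v$r \<in> ?K" and v0: "v \<noteq> 0" and Xv0: "Xi v = 0" by auto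
      have "(N *v v)$i = 0 \<and> (N *v v)$j = 0"
        using noz[OF NvK[OF vK] NvK[OF vK]] Xv0 Xv by simp
      then have vdec: "v = (\<chi> r. (N *v v)$k * u$r + (N *v v)$l * w$r)" by (intro Mdec) simp_all
      have "(N *v v)$k \<noteq> 0 \<or> (N *v v)$l \<noteq> 0"
      proof (rule ccontr)
        assume "\<not> ((N *v v)$k \<noteq> 0 \<or> (N *v v)$l \<noteq> 0)"
        then have "v = 0" using vdec by (simp add: vec_eq_iff)
        then show False using v0 by simp
      qed
      then show "v \<in> {(\<chi> i. s * u$i + t * w$i) | s t. s \<in> ?K \<and> t \<in> ?K \<and> (s \<noteq> 0 \<or> t \<noteq> 0)}"
        using vdec NvK[OF vK] by blast
    next
      fix v assume "v \<in> {(\<chi> i. s * u$i + t * w$i) | s t. s \<in> ?K \<and> t \<in> ?K \<and> (s \<noteq> 0 \<or> t \<noteq> 0)}"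
      then obtain s t where v: "v = (\<chi> i. s * u$i + t * w$i)" and sK: "s \<in> ?K" and tK: "t \<in> ?K"
        and st: "s \<noteq> 0 \<or> t \<noteq> 0" by blast
      have "\<forall>r. v$r \<in> ?K" using sK tK uK by (simp add: v cl)
      moreover have "v \<noteq> 0" using indep[of s t] st v by auto
      moreover have "Xi v = 0"
      proof -
        have "(N *v v)$i = 0" "(N *v v)$j = 0" unfolding v Ncomb using kij by (simp_all add: NMe)
        then show ?thesis by (simp add: Xv g_def)
      qed
      ultimately show "v \<in> {v. (\<forall>i. v$i \<in> ?K) \<and> v \<noteq> 0 \<and> Xi v = 0}" by blast
    qed
  qed
  show ?thesis using cp pl by (simp add: Xi_def)
qed
end
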